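(* Let $N\ge 1$, let $K^{(1)},\ldots,K^{(N)}$ be positive integers, let $L=\sum_{i=1}^N K^{(i)}$, and let $M\ge 1$. For each $i$, let $P^{(i)}\in\{0,1\}^{K^{(i)}\times M}$ be a row-partial permutation matrix, let $P\in\mathbb{R}^{L\times M}$ be the vertical stacking of $P^{(1)},\ldots,P^{(N)}$, and set $Q:=PP^{\top}\in\mathbb{R}^{L\times L}$ (uncorrupted data; the cost matrix is $C=-Q$). Consider the following three optimization problems over symmetric $X\in\mathbb{R}^{L\times L}$ (blocks $X^{(i,j)}\in\mathbb{R}^{K^{(i)}\times K^{(j)}}$ indexed conformally with $P$): (i) (strong SDP) maximize $\mathrm{Tr}[QX]$ subject to $X^{(i,i)}=\mathbf{I}_{K^{(i)}}$ for $i=1,\ldots,N$ and $X\succeq 0$; (ii) (weak SDP) maximize $\mathrm{Tr}[QX]$ subject to $\mathrm{diag}(X)=\mathbf{1}_L$, $\mathrm{Tr}\big[X^{(i,i)}\tfrac{\mathbf{1}_{K^{(i)}}\mathbf{1}_{K^{(i)}}^{\top}}{K^{(i)}}\big]=1$ for $i=1,\ldots,N$, and $X\succeq 0$; (iii) (GW-type SDP) maximize $\mathrm{Tr}[QX]$ subject to $\mathrm{diag}(X)=\mathbf{1}_L$ and $X\succeq 0$. Then $X^{\star}:=Q$ is an optimal solution of each of (i), (ii), (iii). Moreover, for each of these problems, among all of its optimal solutions $X$, $X^{\star}$ minimizes $S(X)$.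
   Context: A row-partial permutation matrix $P^{(i)}\in\{0,1\}^{K^{(i)}\times M}$ is a matrix consisting of a subset of rows of an $M\times M$ permutation matrix, i.e., each row contains exactly one $1$ and each column contains at most one $1$. $\mathbf{1}_n$ is the all-ones vector in $\mathbb{R}^n$ and $\mathbf{I}_n$ the $n\times n$ identity. For a positive semidefinite matrix $X$, the von Neumann entropy functional is $S(X):=\mathrm{Tr}[X\log X]-\mathrm{Tr}[X]$ (with the convention $0\log 0=0$ on the eigenvalues). *)

theory Defs
  imports "Jordan_Normal_Form.Char_Poly" "HOL-Computational_Algebra.Polynomial"
begin

definition mtrace :: "real mat \<Rightarrow> real" where
  "mtrace A = (\<Sum>i<dim_row A. A $$ (i,i))"

definition row_partial_perm :: "nat \<Rightarrow> nat \<Rightarrow> real mat \<Rightarrow> bool" where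
  "row_partial_perm k m A \<longleftrightarrow> A \<in> carrier_mat k m \<and>
     (\<forall>r<k. \<forall>c<m. A $$ (r,c) = 0 \<or> A $$ (r,c) = 1) \<and>
     (\<forall>r<k. \<exists>!c. c < m \<and> A $$ (r,c) = 1) \<and>
     (\<forall>c<m. \<forall>r1<k. \<forall>r2<k. A $$ (r1,c) = 1 \<and> A $$ (r2,c) = 1 \<longrightarrow> r1 = r2)"

definition blk_off :: "(nat \<Rightarrow> nat) \<Rightarrow> nat \<Rightarrow> nat" where
  "blk_off K i = (\<Sum>j<i. K j)"

definition blk_idx :: "(nat \<Rightarrow> nat) \<Rightarrow> nat \<Rightarrow> nat" where
  "blk_idx K r = (LEAST i. r < blk_off K (Suc i))"

definition vstack :: "nat \<Rightarrow> (nat \<Rightarrow> nat) \<Rightarrow> nat \<Rightarrow> (nat \<Rightarrow> real mat) \<Rightarrow> real mat" where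
  "vstack N K M Ps = mat (blk_off K N) M
     (\<lambda>(r,c). Ps (blk_idx K r) $$ (r - blk_off K (blk_idx K r), c))"

definition blk :: "(nat \<Rightarrow> nat) \<Rightarrow> real mat \<Rightarrow> nat \<Rightarrow> nat \<Rightarrow> real mat" where
  "blk K X i j = mat (K i) (K j) (\<lambda>(r,c). X $$ (blk_off K i + r, blk_off K j + c))"

definition psd :: "nat \<Rightarrow> real mat \<Rightarrow> bool" where
  "psd n X \<longleftrightarrow> X \<in> carrier_mat n n \<and> (\<forall>v \<in> carrier_vec n. v \<bullet> (X *\<^sub>v v) \<ge> 0)"

definition sym_mat :: "nat \<Rightarrow> real mat \<Rightarrow> bool" where
  "sym_mat n X \<longleftrightarrow> X \<in> carrier_mat n n \<and> transpose_mat X = X"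

definition strong_feas :: "nat \<Rightarrow> (nat \<Rightarrow> nat) \<Rightarrow> real mat set" where
  "strong_feas N K = {X. sym_mat (blk_off K N) X \<and> psd (blk_off K N) X \<and>
      (\<forall>i<N. blk K X i i = 1\<^sub>m (K i))}"

definition weak_feas :: "nat \<Rightarrow> (nat \<Rightarrow> nat) \<Rightarrow> real mat set" where
  "weak_feas N K = {X. sym_mat (blk_off K N) X \<and> psd (blk_off K N) X \<and>
      (\<forall>r < blk_off K N. X $$ (r,r) = 1) \<and>
      (\<forall>i<N. mtrace (blk K X i i * ((1 / real (K i)) \<cdot>\<^sub>m mat (K i) (K i) (\<lambda>_. 1))) = 1)}"

definition gw_feas :: "nat \<Rightarrow> (nat \<Rightarrow> nat) \<Rightarrow> real mat set" where
  "gw_feas N K = {X. sym_mat (blk_off K N) X \<and> psd (blk_off K N) X \<and>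
      (\<forall>r < blk_off K N. X $$ (r,r) = 1)}"

definition is_opt :: "real mat set \<Rightarrow> real mat \<Rightarrow> real mat \<Rightarrow> bool" where
  "is_opt F Q X \<longleftrightarrow> X \<in> F \<and> (\<forall>Y\<in>F. mtrace (Q * Y) \<le> mtrace (Q * X))"

definition ent_fun :: "real \<Rightarrow> real" where
  "ent_fun x = (if x = 0 then 0 else x * ln x) - x"

(* S(X) = Tr[X log X] - Tr[X] = sum over the eigenvalues (with multiplicity,
   i.e. roots of the characteristic polynomial) of ent_fun *)
definition vn_entropy :: "real mat \<Rightarrow> real" where
  "vn_entropy X = sum_mset (image_mset ent_fun (proots (char_poly X)))"

end

theory Submission
  imports Defs "HOL-Computational_Algebra.Fundamental_Theorem_Algebra"
begin

lemma mult_entry: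
  assumes "A \<in> carrier_mat n k" "B \<in> carrier_mat k m" "i < n" "j < m"
  shows "(A * B) $$ (i,j) = (\<Sum>l<k. A $$ (i,l) * B $$ (l,j))"
  using assms by (auto simp: scalar_prod_def atLeast0LessThan intro!: sum.cong)

lemma mv_entry:
  assumes "A \<in> carrier_mat n k" "v \<in> carrier_vec k" "i < n"
  shows "(A *\<^sub>v v) $ i = (\<Sum>l<k. A $$ (i,l) * v $ l)"
  using assms by (auto simp: scalar_prod_def atLeast0LessThan intro!: sum.cong)

lemma sprod_sum:
  assumes "v \<in> carrier_vec n" "w \<in> carrier_vec n"
  shows "v \<bullet> w = (\<Sum>l<n. v $ l * w $ l)"
  using assms by (auto simp: scalar_prod_def atLeast0LessThan)

lemma sum_delta_mult:
  assumes "k0 < (n::nat)"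
  shows "(\<Sum>k<n. f k * (if k = k0 then 1 else 0)) = (f k0 :: 'a :: comm_ring_1)"
proof -
  have "(\<Sum>k<n. f k * (if k = k0 then 1 else 0)) = (\<Sum>k<n. if k = k0 then f k else 0)"
    by (rule sum.cong, auto)
  also have "\<dots> = f k0" using assms by (subst sum.delta, auto)
  finally show ?thesis .
qed

lemma bd_mult:
  fixes A :: "'a::comm_ring_1 mat"
  assumes "A \<in> carrier_mat a a" "B \<in> carrier_mat b b" "C \<in> carrier_mat a a" "D \<in> carrier_mat b b"
  shows "four_block_mat A (0\<^sub>m a b) (0\<^sub>m b a) B * four_block_mat C (0\<^sub>m a b) (0\<^sub>m b a) D
     = four_block_mat (A * C) (0\<^sub>m a b) (0\<^sub>m b a) (B * D)"
  using assms by (subst mult_four_block_mat[OF assms(1) zero_carrier_mat zero_carrier_mat assms(2) assms(3) zero_carrier_mat zero_carrier_mat assms(4)], auto)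
lemma bd_transpose:
  fixes A :: "'a::comm_ring_1 mat"
  assumes "A \<in> carrier_mat a a" "B \<in> carrier_mat b b"
  shows "transpose_mat (four_block_mat A (0\<^sub>m a b) (0\<^sub>m b a) B)
     = four_block_mat (transpose_mat A) (0\<^sub>m a b) (0\<^sub>m b a) (transpose_mat B)"
  using assms by (subst transpose_four_block_mat, auto)

lemma real_sym_eigen:
  fixes A :: "real mat"
  assumes A: "A \<in> carrier_mat n n" and sym: "transpose_mat A = A" and n: "n > 0"
  shows "\<exists>e v. v \<in> carrier_vec n \<and> v \<noteq> 0\<^sub>v n \<and> A *\<^sub>v v = e \<cdot>\<^sub>v v"
proof -
  define Ac where "Ac = map_mat complex_of_real A"
  have Ac: "Ac \<in> carrier_mat n n" using A by (simp add: Ac_def)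
  have "degree (char_poly Ac) = n" using degree_monic_char_poly[OF Ac] by simp
  then obtain z where "poly (char_poly Ac) z = 0"
    using fundamental_theorem_of_algebra constant_degree n by (metis less_numeral_extra(3))
  then have "eigenvalue Ac z" using eigenvalue_root_char_poly[OF Ac] by simp
  then obtain w where w: "eigenvector Ac w z" unfolding eigenvalue_def by auto
  have wc: "w \<in> carrier_vec n" and w0: "w \<noteq> 0\<^sub>v n" and ev: "Ac *\<^sub>v w = z \<cdot>\<^sub>v w"
    using w Ac unfolding eigenvector_def by auto
  have evi: "(\<Sum>j<n. complex_of_real (A$$(i,j)) * w$j) = z * w$i" if i: "i<n" for i
  proof -
    have "(Ac *\<^sub>v w) $ i = (z \<cdot>\<^sub>v w) $ i" using ev by simp
    then show ?thesis using mv_entry[OF Ac wc i] i A wc by (simp add: Ac_def)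
  qed
  have symi: "A$$(i,j) = A$$(j,i)" if "i<n" "j<n" for i j
    using arg_cong[OF sym, of "\<lambda>B. B $$ (j,i)"] that A by auto
  define s where "s = (\<Sum>i<n. cnj (w$i) * (\<Sum>j<n. complex_of_real (A$$(i,j)) * w$j))"
  define Nr where "Nr = (\<Sum>i<n. (cmod (w$i))^2)"
  have s1: "s = z * complex_of_real Nr"
  proof -
    have "s = (\<Sum>i<n. z * (cnj (w$i) * w$i))" unfolding s_def
      by (rule sum.cong, simp, subst evi, auto)
    also have "\<dots> = z * (\<Sum>i<n. complex_of_real ((cmod (w$i))^2))"
      by (subst sum_distrib_left, rule sum.cong, simp, simp add: complex_norm_square mult.commute del: of_real_power)
    finally show ?thesis by (simp add: Nr_def)
  qed
  have s2: "cnj s = s"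
  proof -
    have "cnj s = (\<Sum>i<n. \<Sum>j<n. w$i * complex_of_real (A$$(i,j)) * cnj (w$j))"
      unfolding s_def by (simp add: sum_distrib_left mult.assoc)
    also have "\<dots> = (\<Sum>j<n. \<Sum>i<n. w$i * complex_of_real (A$$(i,j)) * cnj (w$j))"
      by (rule sum.swap)
    also have "\<dots> = s" unfolding s_def
      by (rule sum.cong, simp, subst sum_distrib_left, rule sum.cong, simp, subst symi, auto simp: ac_simps)
    finally show ?thesis .
  qed
  obtain i0 where i0: "i0 < n" "w $ i0 \<noteq> 0"
    using w0 wc by (metis carrier_vecD eq_vecI index_zero_vec(1) index_zero_vec(2))
  have Nr: "Nr > 0" unfolding Nr_def
    by (rule sum_pos2[of _ i0], insert i0, auto)
  have "cnj z * complex_of_real Nr = z * complex_of_real Nr"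
    using s1 s2 by (metis complex_cnj_complex_of_real complex_cnj_mult)
  then have "cnj z = z" using Nr by simp
  then have imz: "Im z = 0" by (metis Reals_cnj_iff complex_is_Real_iff)
  define e where "e = Re z"
  define vr where "vr = vec n (\<lambda>i. Re (w$i))"
  define vi where "vi = vec n (\<lambda>i. Im (w$i))"
  have "A *\<^sub>v vr = e \<cdot>\<^sub>v vr"
  proof (rule eq_vecI)
    fix i assume "i < dim_vec (e \<cdot>\<^sub>v vr)"
    then have i: "i < n" by (simp add: vr_def)
    have "(A *\<^sub>v vr) $ i = (\<Sum>j<n. A$$(i,j) * Re (w$j))"
      using mv_entry[OF A _ i, of vr] by (simp add: vr_def)
    also have "\<dots> = Re (\<Sum>j<n. complex_of_real (A$$(i,j)) * w$j)" by (simp add: Re_sum)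
    also have "\<dots> = e * Re (w$i)" using evi[OF i] imz by (simp add: e_def)
    finally show "(A *\<^sub>v vr) $ i = (e \<cdot>\<^sub>v vr) $ i" using i by (simp add: vr_def)
  qed (insert A, simp add: vr_def)
  moreover have "A *\<^sub>v vi = e \<cdot>\<^sub>v vi"
  proof (rule eq_vecI)
    fix i assume "i < dim_vec (e \<cdot>\<^sub>v vi)"
    then have i: "i < n" by (simp add: vi_def)
    have "(A *\<^sub>v vi) $ i = (\<Sum>j<n. A$$(i,j) * Im (w$j))"
      using mv_entry[OF A _ i, of vi] by (simp add: vi_def)
    also have "\<dots> = Im (\<Sum>j<n. complex_of_real (A$$(i,j)) * w$j)" by (simp add: Im_sum)
    also have "\<dots> = e * Im (w$i)" using evi[OF i] imz by (simp add: e_def)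
    finally show "(A *\<^sub>v vi) $ i = (e \<cdot>\<^sub>v vi) $ i" using i by (simp add: vi_def)
  qed (insert A, simp add: vi_def)
  moreover have "vr \<noteq> 0\<^sub>v n \<or> vi \<noteq> 0\<^sub>v n"
  proof (rule ccontr)
    assume "\<not> ?thesis"
    then have "vr $ i0 = 0" "vi $ i0 = 0" using i0 by auto
    then show False using i0 by (simp add: vr_def vi_def complex_eq_iff)
  qed
  ultimately show ?thesis by (metis vr_def vi_def vec_carrier)
qed

lemma householder:
  fixes v :: "real vec"
  assumes v: "v \<in> carrier_vec n" and vv: "v \<bullet> v = 1" and n: "0 < n"
  shows "\<exists>H. H \<in> carrier_mat n n \<and> transpose_mat H = H \<and> H * H = 1\<^sub>m n \<and> H *\<^sub>v unit_vec n 0 = v"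
proof (cases "v $ 0 = 1")
  case True
  have vv': "(\<Sum>k<n. v$k * v$k) = 1" using vv sprod_sum[OF v v] by simp
  have "(\<Sum>k<n. v$k * v$k) = v$0 * v$0 + (\<Sum>k\<in>{..<n}-{0}. v$k * v$k)"
    using n by (subst sum.remove[of _ 0], auto)
  then have z: "(\<Sum>k\<in>{..<n}-{0}. v$k * v$k) = 0" using vv' True by simp
  have "v$k = 0" if "k < n" "k \<noteq> 0" for k
  proof -
    have "v$k * v$k = 0" using sum_nonneg_eq_0_iff[THEN iffD1, OF _ _ z] that by auto
    then show ?thesis by simp
  qed
  then have "v = unit_vec n 0" using v True by (intro eq_vecI, auto simp: unit_vec_def)
  then show ?thesis by (intro exI[of _ "1\<^sub>m n"], auto)
next
  case False
  define u where "u = vec n (\<lambda>k. v$k - (if k = 0 then 1 else 0))"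
  define s where "s = (\<Sum>k<n. u$k * u$k)"
  have vv': "(\<Sum>k<n. v$k * v$k) = 1" using vv sprod_sum[OF v v] by simp
  have "s = (\<Sum>k<n. v$k * v$k - (if k = 0 then 2 * v$0 else 0) + (if k = 0 then 1 else 0))"
    unfolding s_def u_def by (rule sum.cong, auto simp: algebra_simps)
  also have "\<dots> = 2 - 2 * v$0" using n vv'
    by (simp add: sum.distrib sum_subtractf)
  finally have s: "s = 2 - 2 * v$0" .
  have s0: "s \<noteq> 0" using s False by simp
  define H where "H = mat n n (\<lambda>(i,j). (if i = j then 1 else 0) - 2 * u$i * u$j / s)"
  have Hc: "H \<in> carrier_mat n n" by (simp add: H_def)
  have HT: "transpose_mat H = H" by (rule eq_matI, auto simp: H_def mult.commute)
  have HH: "H * H = 1\<^sub>m n"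
  proof (rule eq_matI)
    fix i j assume "i < dim_row (1\<^sub>m n)" "j < dim_col (1\<^sub>m n)"
    then have i: "i < n" and j: "j < n" by auto
    have t4: "(\<Sum>k<n. (4 * u$i * u$j / (s * s)) * (u$k * u$k)) = (4 * u$i * u$j / (s * s)) * s"
      unfolding s_def by (rule sum_distrib_left[symmetric])
    have "(H * H) $$ (i,j) = (\<Sum>k<n. H $$ (i,k) * H $$ (k,j))" by (rule mult_entry[OF Hc Hc i j])
    also have "\<dots> = (\<Sum>k<n. (if i = k then (if k = j then 1 else 0) else 0)
        - (if i = k then 2 * u$k * u$j / s else 0) - (if k = j then 2 * u$i * u$k / s else 0)
        + (4 * u$i * u$j / (s * s)) * (u$k * u$k))"
      by (rule sum.cong, auto simp: H_def i j algebra_simps)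
    also have "\<dots> = (\<Sum>k<n. (if i = k then (if k = j then 1 else 0) else 0))
        - (\<Sum>k<n. (if i = k then 2 * u$k * u$j / s else 0)) - (\<Sum>k<n. (if k = j then 2 * u$i * u$k / s else 0))
        + (\<Sum>k<n. (4 * u$i * u$j / (s * s)) * (u$k * u$k))"
      by (simp only: sum.distrib sum_subtractf)
    also have "\<dots> = (if i = j then 1 else 0) - 2 * u$i * u$j / s - 2 * u$i * u$j / s
        + (4 * u$i * u$j / (s * s)) * s"
      using i j t4 by simp
    also have "\<dots> = 1\<^sub>m n $$ (i,j)" using s0 i j by (simp add: field_simps)
    finally show "(H * H) $$ (i,j) = 1\<^sub>m n $$ (i,j)" .
  qed (auto simp: H_def)
  have He: "H *\<^sub>v unit_vec n 0 = v"
  proof (rule eq_vecI)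
    fix i assume "i < dim_vec v"
    then have i: "i < n" using v by auto
    have "(H *\<^sub>v unit_vec n 0) $ i = (\<Sum>k<n. H $$ (i,k) * unit_vec n 0 $ k)"
      by (rule mv_entry[OF Hc _ i], simp)
    also have "\<dots> = H $$ (i,0)" using n by (simp add: unit_vec_def sum_delta_mult)
    also have "\<dots> = (if i = 0 then 1 else 0) - 2 * u$i * (v$0 - 1) / s"
      using i n by (simp add: H_def u_def)
    also have "\<dots> = v $ i" using s0 i unfolding s by (simp add: u_def field_simps)
    finally show "(H *\<^sub>v unit_vec n 0) $ i = v $ i" .
  qed (insert v, auto simp: H_def)
  show ?thesis using Hc HT HH He by blast
qed

lemma spectral:
  fixes A :: "real mat"
  assumes "A \<in> carrier_mat n n" "transpose_mat A = A"
  shows "\<exists>U D. U \<in> carrier_mat n n \<and> D \<in> carrier_mat n n \<and> diagonal_mat D \<and>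
     transpose_mat U * U = 1\<^sub>m n \<and> U * transpose_mat U = 1\<^sub>m n \<and> A = U * D * transpose_mat U"
  using assms
proof (induction n arbitrary: A)
  case 0
  then show ?case
    by (intro exI[of _ "1\<^sub>m 0"], auto simp: diagonal_mat_def intro!: eq_matI)
next
  case (Suc m)
  let ?n = "Suc m"
  have A: "A \<in> carrier_mat ?n ?n" and sym: "transpose_mat A = A" using Suc by auto
  obtain e v0 where v0: "v0 \<in> carrier_vec ?n" "v0 \<noteq> 0\<^sub>v ?n" and ev0: "A *\<^sub>v v0 = e \<cdot>\<^sub>v v0"
    using real_sym_eigen[OF A sym] by auto
  obtain i0 where i0: "i0 < ?n" "v0 $ i0 \<noteq> 0"
    using v0 by (metis carrier_vecD eq_vecI index_zero_vec(1) index_zero_vec(2))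
  define q where "q = v0 \<bullet> v0"
  have q: "q = (\<Sum>k<?n. v0$k * v0$k)" using sprod_sum[OF v0(1) v0(1)] by (simp add: q_def)
  have qpos: "q > 0" unfolding q by (rule sum_pos2[of _ i0], insert i0, auto simp: zero_less_mult_iff)
  define v where "v = (1 / sqrt q) \<cdot>\<^sub>v v0"
  have v: "v \<in> carrier_vec ?n" using v0 by (simp add: v_def)
  have vv: "v \<bullet> v = 1" using qpos v0
    by (simp add: v_def q_def[symmetric] smult_scalar_prod_distrib scalar_prod_smult_distrib)
  have ev: "A *\<^sub>v v = e \<cdot>\<^sub>v v" unfolding v_def
    using ev0 A v0 by (simp add: mult_mat_vec smult_smult_assoc mult.commute)
  obtain H where H: "H \<in> carrier_mat ?n ?n" and HT: "transpose_mat H = H"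
    and HH: "H * H = 1\<^sub>m ?n" and He: "H *\<^sub>v unit_vec ?n 0 = v"
    using householder[OF v vv] by auto
  define A' where "A' = H * A * H"
  have A': "A' \<in> carrier_mat ?n ?n" using H A by (simp add: A'_def)
  have A'T: "transpose_mat A' = A'"
  proof -
    have "transpose_mat A' = transpose_mat H * transpose_mat (H * A)"
      unfolding A'_def using H A by (intro transpose_mult[of _ ?n ?n _ ?n], auto)
    also have "\<dots> = H * (A * H)"
      using H A HT sym by (simp add: transpose_mult[of _ ?n ?n _ ?n])
    also have "\<dots> = A'" unfolding A'_def using H A by (simp add: assoc_mult_mat[of _ ?n ?n _ ?n _ ?n])
    finally show ?thesis .
  qed
  have Hv: "H *\<^sub>v v = unit_vec ?n 0"
    using He H HH by (metis assoc_mult_mat_vec one_mult_mat_vec unit_vec_carrier)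
  have A'e: "A' *\<^sub>v unit_vec ?n 0 = e \<cdot>\<^sub>v unit_vec ?n 0"
  proof -
    have "A' *\<^sub>v unit_vec ?n 0 = H *\<^sub>v (A *\<^sub>v (H *\<^sub>v unit_vec ?n 0))"
      unfolding A'_def using H A by (simp add: assoc_mult_mat_vec[of _ ?n ?n _ ?n])
    also have "\<dots> = e \<cdot>\<^sub>v (H *\<^sub>v v)" using He ev H v by (simp add: mult_mat_vec)
    finally show ?thesis using Hv by simp
  qed
  have col0: "A' $$ (i,0) = (if i = 0 then e else 0)" if i: "i < ?n" for i
  proof -
    have "(A' *\<^sub>v unit_vec ?n 0) $ i = (\<Sum>k<?n. A' $$ (i,k) * unit_vec ?n 0 $ k)"
      by (rule mv_entry[OF A' _ i], simp)
    also have "\<dots> = A' $$ (i,0)" by (simp add: unit_vec_def sum_delta_mult)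
    finally show ?thesis using A'e i by (cases "i = 0", auto)
  qed
  have symA': "A' $$ (i,j) = A' $$ (j,i)" if "i < ?n" "j < ?n" for i j
    using arg_cong[OF A'T, of "\<lambda>B. B $$ (j,i)"] that A' by auto
  have row0: "A' $$ (0,j) = (if j = 0 then e else 0)" if "j < ?n" for j
    using symA'[of 0 j] col0[of j] that by simp
  define A3 where "A3 = mat m m (\<lambda>(i,j). A' $$ (Suc i, Suc j))"
  have A3: "A3 \<in> carrier_mat m m" by (simp add: A3_def)
  have A3T: "transpose_mat A3 = A3"
    by (rule eq_matI, auto simp: A3_def symA')
  obtain U3 D3 where U3: "U3 \<in> carrier_mat m m" and D3: "D3 \<in> carrier_mat m m"
    and D3d: "diagonal_mat D3" and U3a: "transpose_mat U3 * U3 = 1\<^sub>m m"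
    and U3b: "U3 * transpose_mat U3 = 1\<^sub>m m" and A3eq: "A3 = U3 * D3 * transpose_mat U3"
    using Suc.IH[OF A3 A3T] by blast
  define E where "E = mat 1 1 (\<lambda>_. e)"
  have E: "E \<in> carrier_mat 1 1" by (simp add: E_def)
  have A'blk: "A' = four_block_mat E (0\<^sub>m 1 m) (0\<^sub>m m 1) A3"
  proof (rule eq_matI)
    fix i j assume ij: "i < dim_row (four_block_mat E (0\<^sub>m 1 m) (0\<^sub>m m 1) A3)"
      "j < dim_col (four_block_mat E (0\<^sub>m 1 m) (0\<^sub>m m 1) A3)"
    then have i: "i < ?n" and j: "j < ?n" by (auto simp: E_def A3_def)
    show "A' $$ (i,j) = four_block_mat E (0\<^sub>m 1 m) (0\<^sub>m m 1) A3 $$ (i,j)"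
    proof (cases "i = 0 \<or> j = 0")
      case True
      then show ?thesis using col0 row0 i j by (auto simp: E_def A3_def)
    next
      case False
      then obtain i' j' where "i = Suc i'" "j = Suc j'" by (metis not0_implies_Suc)
      then show ?thesis using i j by (auto simp: E_def A3_def)
    qed
  qed (insert A', auto simp: E_def A3_def)
  define V where "V = four_block_mat (1\<^sub>m 1) (0\<^sub>m 1 m) (0\<^sub>m m 1) U3"
  define D where "D = four_block_mat E (0\<^sub>m 1 m) (0\<^sub>m m 1) D3"
  have V: "V \<in> carrier_mat ?n ?n"
  proof -
    have "V \<in> carrier_mat (1+m) (1+m)" unfolding V_def by (rule four_block_carrier_mat[OF _ U3], simp)
    then show ?thesis by simp
  qed
  have D: "D \<in> carrier_mat ?n ?n"
  proof -
    have "D \<in> carrier_mat (1+m) (1+m)" unfolding D_def by (rule four_block_carrier_mat[OF E D3])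
    then show ?thesis by simp
  qed
  have VT: "transpose_mat V = four_block_mat (1\<^sub>m 1) (0\<^sub>m 1 m) (0\<^sub>m m 1) (transpose_mat U3)"
    unfolding V_def using bd_transpose[OF one_carrier_mat U3] by simp
  have VTV: "transpose_mat V * V = 1\<^sub>m ?n"
  proof -
    have "transpose_mat V * V = four_block_mat (1\<^sub>m 1 * 1\<^sub>m 1) (0\<^sub>m 1 m) (0\<^sub>m m 1) (transpose_mat U3 * U3)"
      unfolding VT unfolding V_def by (rule bd_mult, insert U3, auto)
    then show ?thesis using U3a four_block_one_mat[of 1 m] by simp
  qed
  have VVT: "V * transpose_mat V = 1\<^sub>m ?n"
  proof -
    have "V * transpose_mat V = four_block_mat (1\<^sub>m 1 * 1\<^sub>m 1) (0\<^sub>m 1 m) (0\<^sub>m m 1) (U3 * transpose_mat U3)"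
      unfolding VT unfolding V_def by (rule bd_mult, insert U3, auto)
    then show ?thesis using U3b four_block_one_mat[of 1 m] by simp
  qed
  have VDV: "V * D * transpose_mat V = A'"
  proof -
    have VD: "V * D = four_block_mat (1\<^sub>m 1 * E) (0\<^sub>m 1 m) (0\<^sub>m m 1) (U3 * D3)"
      unfolding V_def D_def by (rule bd_mult, insert U3 D3 E, auto)
    have "V * D * transpose_mat V = four_block_mat (1\<^sub>m 1 * E * 1\<^sub>m 1) (0\<^sub>m 1 m) (0\<^sub>m m 1) (U3 * D3 * transpose_mat U3)"
      unfolding VT VD by (rule bd_mult, insert U3 D3 E, auto)
    then show ?thesis using A'blk A3eq E by simp
  qed
  have Dd: "diagonal_mat D"
    unfolding diagonal_mat_def
  proof (intro allI impI)
    fix i j assume ij: "i < dim_row D" "j < dim_col D" "i \<noteq> j"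
    then have i: "i < ?n" and j: "j < ?n" using D by auto
    show "D $$ (i,j) = 0"
    proof (cases "i = 0 \<or> j = 0")
      case True
      then show ?thesis using ij i j D3 by (auto simp: D_def E_def)
    next
      case False
      then obtain i' j' where "i = Suc i'" "j = Suc j'" by (metis not0_implies_Suc)
      then show ?thesis using i j ij D3 D3d by (auto simp: D_def E_def diagonal_mat_def)
    qed
  qed
  define U where "U = H * V"
  have U: "U \<in> carrier_mat ?n ?n" using H V by (simp add: U_def)
  have UT: "transpose_mat U = transpose_mat V * H"
    unfolding U_def using H V HT by (simp add: transpose_mult[of _ ?n ?n])
  have UTU: "transpose_mat U * U = 1\<^sub>m ?n"
  proof -
    have "transpose_mat U * U = transpose_mat V * (H * H) * V"
      unfolding UT unfolding U_def using H V
      by (simp add: assoc_mult_mat[of _ ?n ?n _ ?n _ ?n])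
    then show ?thesis using HH VTV V by simp
  qed
  have UUT: "U * transpose_mat U = 1\<^sub>m ?n"
  proof -
    have "U * transpose_mat U = H * (V * transpose_mat V) * H"
      unfolding UT unfolding U_def using H V
      by (simp add: assoc_mult_mat[of _ ?n ?n _ ?n _ ?n])
    then show ?thesis using HH VVT H by simp
  qed
  have "A = H * A' * H"
  proof -
    have "H * A' * H = (H * H) * A * (H * H)"
      unfolding A'_def using H A by (simp add: assoc_mult_mat[of _ ?n ?n _ ?n _ ?n])
    then show ?thesis using HH A by simp
  qed
  also have "\<dots> = H * (V * D * transpose_mat V) * H" using VDV by simp
  also have "\<dots> = U * D * transpose_mat U"
    unfolding UT unfolding U_def using H V D
    by (simp add: assoc_mult_mat[of _ ?n ?n _ ?n _ ?n])
  finally have "A = U * D * transpose_mat U" .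
  then show ?case using U D Dd UTU UUT by blast
qed

lemma quad_entry:
  fixes B W :: "'a::comm_ring_1 mat"
  assumes B: "B \<in> carrier_mat n n" and W: "W \<in> carrier_mat n n" and i: "i < n" and j: "j < n"
  shows "(transpose_mat W * B * W) $$ (i,j) = col W i \<bullet> (B *\<^sub>v col W j)"
proof -
  have "transpose_mat W * B * W = transpose_mat W * (B * W)"
    using B W by (simp add: assoc_mult_mat[of _ n n _ n _ n])
  moreover have "(transpose_mat W * (B * W)) $$ (i,j) = row (transpose_mat W) i \<bullet> col (B * W) j"
    using B W i j by (intro index_mult_mat, auto)
  moreover have "row (transpose_mat W) i = col W i" using W i by simp
  moreover have "col (B * W) j = B *\<^sub>v col W j" by (rule col_mult2[OF B W j])
  ultimately show ?thesis by simp
qed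

lemma proots_lin_prod: "proots (\<Prod>a\<leftarrow>xs. [:- a, 1:]) = mset (xs :: 'a::idom list)"
proof (induction xs)
  case (Cons a xs)
  have nz: "(\<Prod>a\<leftarrow>xs. [:- a, 1:]) \<noteq> 0" by (auto simp: prod_list_zero_iff)
  have "(\<Prod>a\<leftarrow>(a # xs). [:- a, 1:]) = [:- a, 1:] * (\<Prod>a\<leftarrow>xs. [:- a, 1:])" by simp
  then have "proots (\<Prod>a\<leftarrow>(a # xs). [:- a, 1:]) = proots [:- a, 1:] + proots (\<Prod>a\<leftarrow>xs. [:- a, 1:])"
    using proots_mult[OF _ nz, of "[:- a, 1:]"] by simp
  then show ?case using Cons by simp
qed simp

lemma vn_entropy_conj:
  assumes W: "W \<in> carrier_mat n n" and D: "D \<in> carrier_mat n n" and Dd: "diagonal_mat D"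
    and WTW: "transpose_mat W * W = 1\<^sub>m n" and WWT: "W * transpose_mat W = 1\<^sub>m n"
    and A: "A = W * D * transpose_mat W"
  shows "vn_entropy A = (\<Sum>i<n. ent_fun (D $$ (i,i)))"
proof -
  have "similar_mat_wit A D W (transpose_mat W)"
    by (rule similar_mat_witI[of _ _ n], insert W D WTW WWT A, auto)
  then have sim: "similar_mat A D" unfolding similar_mat_def by blast
  have ut: "upper_triangular D" using Dd D unfolding diagonal_mat_def upper_triangular_def by auto
  have cp: "char_poly A = (\<Prod>a\<leftarrow>diag_mat D. [:- a, 1:])"
    using char_poly_similar[OF sim] char_poly_upper_triangular[OF D ut] by simp
  have pr: "proots (char_poly A) = mset (diag_mat D)"
    unfolding cp by (rule proots_lin_prod)
  have "vn_entropy A = sum_list (map ent_fun (diag_mat D))"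
    unfolding vn_entropy_def pr by (metis mset_map sum_mset_sum_list)
  also have "\<dots> = (\<Sum>i<n. ent_fun (D $$ (i,i)))"
    using D by (simp add: diag_mat_def sum_list_sum_nth atLeast0LessThan)
  finally show ?thesis .
qed

lemma ent_tangent:
  assumes a: "a > 0" and x: "x \<ge> 0"
  shows "ent_fun a + ln a * (x - a) \<le> ent_fun x"
proof (cases "x = 0")
  case True
  then show ?thesis using a by (simp add: ent_fun_def algebra_simps)
next
  case False
  then have xp: "x > 0" using x by simp
  have "ln (a / x) \<le> a / x - 1" using a xp by (intro ln_le_minus_one, simp)
  then have "x * ln (a / x) \<le> x * (a / x - 1)" using xp by (intro mult_left_mono, auto)
  moreover have "x * (a / x - 1) = a - x" using xp by (simp add: field_simps)
  moreover have "x * ln (a / x) = x * ln a - x * ln x" using a xp by (simp add: ln_div right_diff_distrib)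
  ultimately have "x * ln a - x * ln x \<le> a - x" by simp
  moreover have "ent_fun x = x * ln x - x" "ent_fun a = a * ln a - a" using xp a by (auto simp: ent_fun_def)
  ultimately show ?thesis by (simp add: algebra_simps)
qed

lemma jensen_ent:
  assumes fin: "finite I" and p: "\<And>i. i \<in> I \<Longrightarrow> p i \<ge> 0" and p1: "(\<Sum>i\<in>I. p i) = 1"
    and x: "\<And>i. i \<in> I \<Longrightarrow> x i \<ge> 0"
  shows "ent_fun (\<Sum>i\<in>I. p i * x i) \<le> (\<Sum>i\<in>I. p i * ent_fun (x i))"
proof -
  define a where "a = (\<Sum>i\<in>I. p i * x i)"
  have a0: "a \<ge> 0" unfolding a_def using p x by (intro sum_nonneg, auto)
  show ?thesis
  proof (cases "a = 0")
    case True
    have z: "p i * x i = 0" if "i \<in> I" for i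
      using sum_nonneg_eq_0_iff[OF fin, of "\<lambda>i. p i * x i"] True p x that unfolding a_def by auto
    have "(\<Sum>i\<in>I. p i * ent_fun (x i)) = 0"
      by (rule sum.neutral, auto simp: ent_fun_def dest!: z)
    then show ?thesis using True by (simp add: a_def[symmetric] ent_fun_def)
  next
    case False
    then have ap: "a > 0" using a0 by simp
    have "(\<Sum>i\<in>I. p i * (ent_fun a + ln a * (x i - a))) \<le> (\<Sum>i\<in>I. p i * ent_fun (x i))"
      by (rule sum_mono, rule mult_left_mono, rule ent_tangent[OF ap x], auto simp: p)
    moreover have "(\<Sum>i\<in>I. p i * (ent_fun a + ln a * (x i - a))) = ent_fun a"
    proof -
      have "(\<Sum>i\<in>I. p i * (ent_fun a + ln a * (x i - a)))
          = (\<Sum>i\<in>I. p i) * (ent_fun a - ln a * a) + ln a * (\<Sum>i\<in>I. p i * x i)"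
        by (simp add: algebra_simps sum.distrib sum_distrib_left sum_distrib_right sum_subtractf)
      then show ?thesis using p1 by (simp add: a_def[symmetric] algebra_simps)
    qed
    ultimately show ?thesis by (simp add: a_def)
  qed
qed

lemma psd_diag_nonneg:
  assumes psd: "psd n A" and U: "U \<in> carrier_mat n n" and D: "D \<in> carrier_mat n n"
    and UTU: "transpose_mat U * U = 1\<^sub>m n" and A: "A = U * D * transpose_mat U" and k: "k < n"
  shows "D $$ (k,k) \<ge> 0"
proof -
  have Ac: "A \<in> carrier_mat n n" using psd unfolding psd_def by auto
  have "transpose_mat U * A * U = (transpose_mat U * U) * D * (transpose_mat U * U)"
    unfolding A using U D by (simp add: assoc_mult_mat[of _ n n _ n _ n])
  then have "transpose_mat U * A * U = D" using UTU D by simp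
  then have "D $$ (k,k) = col U k \<bullet> (A *\<^sub>v col U k)" using quad_entry[OF Ac U k k] by simp
  also have "\<dots> \<ge> 0" using psd U k unfolding psd_def by auto
  finally show ?thesis .
qed

lemma schur_jensen:
  assumes U: "U \<in> carrier_mat n n" and D: "D \<in> carrier_mat n n" and Dd: "diagonal_mat D"
    and UTU: "transpose_mat U * U = 1\<^sub>m n" and UUT: "U * transpose_mat U = 1\<^sub>m n"
    and A: "A = U * D * transpose_mat U" and Dpos: "\<And>k. k < n \<Longrightarrow> D $$ (k,k) \<ge> 0"
    and W: "W \<in> carrier_mat n n" and WTW: "transpose_mat W * W = 1\<^sub>m n"
  shows "(\<Sum>j<n. ent_fun ((transpose_mat W * A * W) $$ (j,j))) \<le> (\<Sum>k<n. ent_fun (D $$ (k,k)))"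
proof -
  define V where "V = transpose_mat U * W"
  have V: "V \<in> carrier_mat n n" using U W by (simp add: V_def)
  have VT: "transpose_mat V = transpose_mat W * U"
    unfolding V_def using U W by (simp add: transpose_mult[of _ n n _ n])
  have VTV: "transpose_mat V * V = 1\<^sub>m n"
  proof -
    have "transpose_mat V * V = transpose_mat W * (U * transpose_mat U) * W"
      unfolding VT unfolding V_def using U W by (simp add: assoc_mult_mat[of _ n n _ n _ n])
    then show ?thesis using UUT WTW W by simp
  qed
  have VVT: "V * transpose_mat V = 1\<^sub>m n"
    using mat_mult_left_right_inverse[OF _ V VTV] V by simp
  have WAW: "transpose_mat W * A * W = transpose_mat V * D * V"
    unfolding VT unfolding V_def A using U W D by (simp add: assoc_mult_mat[of _ n n _ n _ n])
  have entry: "(transpose_mat V * D * V) $$ (j,j) = (\<Sum>k<n. (V $$ (k,j))^2 * D $$ (k,k))" if j: "j < n" for j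
  proof -
    have "(transpose_mat V * D * V) $$ (j,j) = (\<Sum>l<n. (transpose_mat V * D) $$ (j,l) * V $$ (l,j))"
      by (rule mult_entry[of _ n n _ n], insert V D j, auto)
    also have "\<dots> = (\<Sum>l<n. (V $$ (l,j) * D $$ (l,l)) * V $$ (l,j))"
    proof (rule sum.cong, simp)
      fix l assume l: "l \<in> {..<n}"
      have "(transpose_mat V * D) $$ (j,l) = (\<Sum>k<n. V $$ (k,j) * D $$ (k,l))"
        using mult_entry[of "transpose_mat V" n n D n j l] V D j l by simp
      also have "\<dots> = (\<Sum>k<n. if k = l then V $$ (k,j) * D $$ (k,l) else 0)"
        by (rule sum.cong, insert Dd D l, auto simp: diagonal_mat_def)
      also have "\<dots> = V $$ (l,j) * D $$ (l,l)" using l by (subst sum.delta, auto)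
      finally show "(transpose_mat V * D) $$ (j,l) * V $$ (l,j) = (V $$ (l,j) * D $$ (l,l)) * V $$ (l,j)" by simp
    qed
    also have "\<dots> = (\<Sum>k<n. (V $$ (k,j))^2 * D $$ (k,k))"
      by (rule sum.cong, auto simp: power2_eq_square)
    finally show ?thesis .
  qed
  have rowsum: "(\<Sum>k<n. (V $$ (k,j))^2) = 1" if j: "j < n" for j
  proof -
    have "(transpose_mat V * V) $$ (j,j) = (\<Sum>k<n. V $$ (k,j) * V $$ (k,j))"
      using mult_entry[of "transpose_mat V" n n V n j j] V j by simp
    then show ?thesis using VTV j by (simp add: power2_eq_square)
  qed
  have colsum: "(\<Sum>j<n. (V $$ (k,j))^2) = 1" if k: "k < n" for k
  proof -
    have "(V * transpose_mat V) $$ (k,k) = (\<Sum>j<n. V $$ (k,j) * V $$ (k,j))"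
      using mult_entry[of V n n "transpose_mat V" n k k] V k by simp
    then show ?thesis using VVT k by (simp add: power2_eq_square)
  qed
  have "(\<Sum>j<n. ent_fun ((transpose_mat W * A * W) $$ (j,j)))
      = (\<Sum>j<n. ent_fun (\<Sum>k<n. (V $$ (k,j))^2 * D $$ (k,k)))"
    by (rule sum.cong, auto simp: WAW entry)
  also have "\<dots> \<le> (\<Sum>j<n. \<Sum>k<n. (V $$ (k,j))^2 * ent_fun (D $$ (k,k)))"
    by (rule sum_mono, rule jensen_ent, auto simp: rowsum Dpos)
  also have "\<dots> = (\<Sum>k<n. \<Sum>j<n. (V $$ (k,j))^2 * ent_fun (D $$ (k,k)))" by (rule sum.swap)
  also have "\<dots> = (\<Sum>k<n. ent_fun (D $$ (k,k)))"
    by (rule sum.cong, simp, subst sum_distrib_right[symmetric], simp add: colsum)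
  finally show ?thesis .
qed

lemma sum_if3:
  assumes "t < (n::nat)" "r < n" "s < n"
  shows "(\<Sum>l<n. ((if l = t then a else 0) + (if l = r then b else 0) + (if l = s then c else 0)) * g l)
    = a * g t + b * g r + c * (g s :: real)"
proof -
  have "(\<Sum>l<n. ((if l = t then a else 0) + (if l = r then b else 0) + (if l = s then c else 0)) * g l)
     = (\<Sum>l<n. (if l = t then a * g l else 0)) + (\<Sum>l<n. (if l = r then b * g l else 0))
       + (\<Sum>l<n. (if l = s then c * g l else 0))"
    by (subst sum.distrib[symmetric], subst sum.distrib[symmetric], rule sum.cong, auto simp: distrib_right)
  also have "\<dots> = a * g t + b * g r + c * g s" using assms by (simp add: sum.delta)
  finally show ?thesis .
qed

lemma qf3:
  fixes Y :: "real mat" and a b c :: real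
  assumes Y: "Y \<in> carrier_mat n n" and tn: "t < n" and rn: "r < n" and sn: "s < n"
  defines "v \<equiv> vec n (\<lambda>i. (if i = t then a else 0) + (if i = r then b else 0) + (if i = s then c else 0))"
  shows "v \<bullet> (Y *\<^sub>v v) = a * (a * Y$$(t,t) + b * Y$$(t,r) + c * Y$$(t,s))
     + b * (a * Y$$(r,t) + b * Y$$(r,r) + c * Y$$(r,s)) + c * (a * Y$$(s,t) + b * Y$$(s,r) + c * Y$$(s,s))"
proof -
  have v: "v \<in> carrier_vec n" by (simp add: v_def)
  have Yv: "(Y *\<^sub>v v) $ i = a * Y$$(i,t) + b * Y$$(i,r) + c * Y$$(i,s)" if i: "i < n" for i
  proof -
    have "(Y *\<^sub>v v) $ i = (\<Sum>l<n. Y $$ (i,l) * v $ l)" by (rule mv_entry[OF Y v i])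
    also have "\<dots> = (\<Sum>l<n. ((if l = t then a else 0) + (if l = r then b else 0) + (if l = s then c else 0)) * Y $$ (i,l))"
      by (rule sum.cong, auto simp: v_def mult.commute)
    also have "\<dots> = a * Y$$(i,t) + b * Y$$(i,r) + c * Y$$(i,s)" by (rule sum_if3[OF tn rn sn])
    finally show ?thesis .
  qed
  have "v \<bullet> (Y *\<^sub>v v) = (\<Sum>l<n. v $ l * (Y *\<^sub>v v) $ l)" using sprod_sum[OF v mult_mat_vec_carrier[OF Y v]] by simp
  also have "\<dots> = (\<Sum>l<n. ((if l = t then a else 0) + (if l = r then b else 0) + (if l = s then c else 0)) * (Y *\<^sub>v v) $ l)"
    by (rule sum.cong, auto simp: v_def)
  also have "\<dots> = a * (Y *\<^sub>v v) $ t + b * (Y *\<^sub>v v) $ r + c * (Y *\<^sub>v v) $ s" by (rule sum_if3[OF tn rn sn])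
  finally show ?thesis using Yv tn rn sn by simp
qed

definition common_feas :: "nat \<Rightarrow> real mat \<Rightarrow> bool" where
  "common_feas n Y \<longleftrightarrow> sym_mat n Y \<and> psd n Y \<and> (\<forall>r<n. Y $$ (r,r) = 1)"

lemma common_le1:
  assumes Y: "common_feas n Y" and r: "r < n" and s: "s < n"
  shows "Y $$ (r,s) \<le> 1"
proof -
  have Yc: "Y \<in> carrier_mat n n" and sym: "transpose_mat Y = Y" and diag: "\<And>r. r < n \<Longrightarrow> Y $$ (r,r) = 1"
    using Y unfolding common_feas_def sym_mat_def by auto
  have ps: "\<And>v. v \<in> carrier_vec n \<Longrightarrow> v \<bullet> (Y *\<^sub>v v) \<ge> 0" using Y unfolding common_feas_def psd_def by auto
  have symi: "Y $$ (s,r) = Y $$ (r,s)" using arg_cong[OF sym, of "\<lambda>B. B $$ (r,s)"] Yc r s by auto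
  let ?v = "vec n (\<lambda>i. (if i = r then 1 else 0) + (if i = s then -1 else 0) + (if i = s then 0 else 0)) :: real vec"
  have "?v \<bullet> (Y *\<^sub>v ?v) \<ge> 0" by (rule ps, simp)
  then show ?thesis using qf3[OF Yc r s s, of 1 "-1" 0] diag[OF r] diag[OF s] symi by simp
qed

lemma common_const:
  assumes Y: "common_feas n Y" and t: "t < n" and r: "r < n" and s: "s < n" and Yrs: "Y $$ (r,s) = 1"
  shows "Y $$ (t,r) = Y $$ (t,s)"
proof -
  have Yc: "Y \<in> carrier_mat n n" and sym: "transpose_mat Y = Y" and diag: "\<And>r. r < n \<Longrightarrow> Y $$ (r,r) = 1"
    using Y unfolding common_feas_def sym_mat_def by auto
  have ps: "\<And>v. v \<in> carrier_vec n \<Longrightarrow> v \<bullet> (Y *\<^sub>v v) \<ge> 0" using Y unfolding common_feas_def psd_def by auto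
  have symi: "\<And>i j. i < n \<Longrightarrow> j < n \<Longrightarrow> Y $$ (j,i) = Y $$ (i,j)"
    using sym Yc by (metis carrier_matD index_transpose_mat(1))
  define d where "d = Y $$ (t,r) - Y $$ (t,s)"
  let ?v = "vec n (\<lambda>i. (if i = t then -d else 0) + (if i = r then 1 else 0) + (if i = s then -1 else 0)) :: real vec"
  have "?v \<bullet> (Y *\<^sub>v ?v) \<ge> 0" by (rule ps, simp)
  moreover have "?v \<bullet> (Y *\<^sub>v ?v) = - (d * d)"
    using qf3[OF Yc t r s, of "-d" 1 "-1"] diag[OF t] diag[OF r] diag[OF s] symi[OF t r] symi[OF t s] symi[OF r s] Yrs
    by (simp add: d_def algebra_simps)
  ultimately have "d * d \<le> 0" by simp
  then have "d = 0" using not_real_square_gt_zero[of d] by linarith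
  then show ?thesis by (simp add: d_def)
qed

lemma blk_off_mono: "a \<le> b \<Longrightarrow> blk_off K a \<le> blk_off K b"
  unfolding blk_off_def by (rule sum_mono2, auto)

lemma blk_off_Suc: "blk_off K (Suc i) = blk_off K i + K i"
  unfolding blk_off_def by simp

lemma blk_idx_props:
  assumes r: "r < blk_off K N"
  shows "blk_idx K r < N" "blk_off K (blk_idx K r) \<le> r" "r < blk_off K (blk_idx K r) + K (blk_idx K r)"
proof -
  have N0: "N \<noteq> 0" using r by (cases N, auto simp: blk_off_def)
  have ex: "r < blk_off K (Suc (N - 1))" using r N0 by simp
  have l1: "r < blk_off K (Suc (blk_idx K r))" unfolding blk_idx_def by (rule LeastI[of "\<lambda>i. r < blk_off K (Suc i)", OF ex])
  have l2: "blk_idx K r \<le> N - 1" unfolding blk_idx_def by (rule Least_le[of "\<lambda>i. r < blk_off K (Suc i)", OF ex])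
  show "blk_idx K r < N" using l2 N0 by simp
  show "r < blk_off K (blk_idx K r) + K (blk_idx K r)" using l1 by (simp add: blk_off_Suc)
  show "blk_off K (blk_idx K r) \<le> r"
  proof (cases "blk_idx K r")
    case 0
    then show ?thesis by (simp add: blk_off_def)
  next
    case (Suc j)
    have "\<not> r < blk_off K (Suc j)" using not_less_Least[of j "\<lambda>i. r < blk_off K (Suc i)"] Suc
      unfolding blk_idx_def by simp
    then show ?thesis using Suc by simp
  qed
qed

lemma blk_idx_eq:
  assumes k: "k < K i"
  shows "blk_idx K (blk_off K i + k) = i"
  unfolding blk_idx_def
proof (rule Least_equality)
  show "blk_off K i + k < blk_off K (Suc i)" using k by (simp add: blk_off_Suc)
next
  fix j assume j: "blk_off K i + k < blk_off K (Suc j)"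
  show "i \<le> j"
  proof (rule ccontr)
    assume "\<not> i \<le> j"
    then have "Suc j \<le> i" by simp
    then have "blk_off K (Suc j) \<le> blk_off K i" by (rule blk_off_mono)
    then show False using j by simp
  qed
qed

locale pp_setup =
  fixes N M :: nat and K :: "nat \<Rightarrow> nat" and Ps :: "nat \<Rightarrow> real mat"
  assumes N1: "N \<ge> 1" and M1: "M \<ge> 1"
    and Kpos: "\<forall>i<N. K i \<ge> 1"
    and rpp: "\<forall>i<N. row_partial_perm (K i) M (Ps i)"
begin

abbreviation "L \<equiv> blk_off K N"
abbreviation "PP \<equiv> vstack N K M Ps"
abbreviation "QQ \<equiv> PP * transpose_mat PP"

definition gam :: "nat \<Rightarrow> nat" where
  "gam r = (THE c. c < M \<and> PP $$ (r,c) = 1)"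

lemma P_carrier: "PP \<in> carrier_mat L M"
  by (simp add: vstack_def)

lemma Q_carrier: "QQ \<in> carrier_mat L L"
  using P_carrier by simp

lemma P_entry: "r < L \<Longrightarrow> c < M \<Longrightarrow>
   PP $$ (r,c) = Ps (blk_idx K r) $$ (r - blk_off K (blk_idx K r), c)"
  by (simp add: vstack_def)

lemma row_props:
  assumes r: "r < L"
  shows "\<exists>!c. c < M \<and> PP $$ (r,c) = 1" "\<And>c. c < M \<Longrightarrow> PP $$ (r,c) = 0 \<or> PP $$ (r,c) = 1"
proof -
  let ?i = "blk_idx K r"
  let ?a = "r - blk_off K ?i"
  have i: "?i < N" and a: "?a < K ?i" using blk_idx_props[OF r] by auto
  have R: "row_partial_perm (K ?i) M (Ps ?i)" using rpp i by auto
  have "\<exists>!c. c < M \<and> Ps ?i $$ (?a,c) = 1" using R a unfolding row_partial_perm_def by auto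
  moreover have "(\<lambda>c. c < M \<and> PP $$ (r,c) = 1) = (\<lambda>c. c < M \<and> Ps ?i $$ (?a,c) = 1)"
    using P_entry[OF r] by (intro ext, auto)
  ultimately show "\<exists>!c. c < M \<and> PP $$ (r,c) = 1" by simp
  show "\<And>c. c < M \<Longrightarrow> PP $$ (r,c) = 0 \<or> PP $$ (r,c) = 1"
    using R a P_entry[OF r] unfolding row_partial_perm_def by auto
qed

lemma gam: assumes r: "r < L" shows "gam r < M" "PP $$ (r, gam r) = 1"
  using theI'[OF row_props(1)[OF r]] unfolding gam_def by auto

lemma P01: assumes r: "r < L" and c: "c < M" shows "PP $$ (r,c) = (if c = gam r then 1 else 0)"
proof (cases "c = gam r")
  case True then show ?thesis using gam[OF r] by simp
next
  case False
  have "PP $$ (r,c) \<noteq> 1" using row_props(1)[OF r] gam[OF r] c False by blast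
  then show ?thesis using row_props(2)[OF r c] False by auto
qed

lemma Q_entry: assumes r: "r < L" and s: "s < L"
  shows "QQ $$ (r,s) = (if gam r = gam s then 1 else 0)"
proof -
  have "QQ $$ (r,s) = (\<Sum>c<M. PP $$ (r,c) * transpose_mat PP $$ (c,s))"
    by (rule mult_entry[OF P_carrier _ r s], insert P_carrier, auto)
  also have "\<dots> = (\<Sum>c<M. (if c = gam r then 1 else 0) * (if c = gam s then 1 else 0))"
    using r s P_carrier by (intro sum.cong, auto simp: P01)
  also have "\<dots> = (if gam r = gam s then 1 else 0)"
    using sum_delta_mult[OF gam(1)[OF s], of "\<lambda>c. if c = gam r then 1 else (0::real)"] by auto
  finally show ?thesis .
qed

lemma same_blk:
  assumes r: "r < L" and s: "s < L" and b: "blk_idx K r = blk_idx K s" and g: "gam r = gam s"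
  shows "r = s"
proof -
  let ?i = "blk_idx K r"
  have i: "?i < N" and a: "r - blk_off K ?i < K ?i" "blk_off K ?i \<le> r" using blk_idx_props[OF r] by auto
  have a2: "s - blk_off K ?i < K ?i" "blk_off K ?i \<le> s" using blk_idx_props[OF s] b by auto
  have R: "row_partial_perm (K ?i) M (Ps ?i)" using rpp i by auto
  have "Ps ?i $$ (r - blk_off K ?i, gam r) = 1" using gam[OF r] P_entry[OF r] by simp
  moreover have "Ps ?i $$ (s - blk_off K ?i, gam r) = 1" using gam[OF s] P_entry[OF s] b g by simp
  moreover have col: "\<forall>c<M. \<forall>r1<K ?i. \<forall>r2<K ?i. Ps ?i $$ (r1,c) = 1 \<and> Ps ?i $$ (r2,c) = 1 \<longrightarrow> r1 = r2"
    using R unfolding row_partial_perm_def by blast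
  ultimately have "r - blk_off K ?i = s - blk_off K ?i"
    using col[rule_format, OF gam(1)[OF r] a(1) a2(1)] by blast
  then show ?thesis using a a2 by simp
qed

lemma Q_sym: "transpose_mat QQ = QQ"
  using transpose_mult[of PP L M "transpose_mat PP" L] P_carrier by simp

lemma Q_psd: "psd L QQ"
  unfolding psd_def
proof (intro conjI ballI)
  show "QQ \<in> carrier_mat L L" by (rule Q_carrier)
  fix v :: "real vec" assume v: "v \<in> carrier_vec L"
  have "v \<bullet> (QQ *\<^sub>v v) = v \<bullet> (PP *\<^sub>v (transpose_mat PP *\<^sub>v v))"
    using P_carrier v by (simp add: assoc_mult_mat_vec[of _ L M _ L])
  also have "\<dots> = (transpose_mat PP *\<^sub>v v) \<bullet> (transpose_mat PP *\<^sub>v v)"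
  proof -
    have w: "transpose_mat PP *\<^sub>v v \<in> carrier_vec M" by (rule mult_mat_vec_carrier[OF transpose_carrier_mat[THEN iffD2, OF P_carrier] v])
    show ?thesis using transpose_vec_mult_scalar[OF P_carrier w v] by simp
  qed
  also have "\<dots> \<ge> 0" unfolding scalar_prod_def by (intro sum_nonneg, auto)
  finally show "v \<bullet> (QQ *\<^sub>v v) \<ge> 0" .
qed

lemma Q_diag: "r < L \<Longrightarrow> QQ $$ (r,r) = 1" by (simp add: Q_entry)

lemma Q_common: "common_feas L QQ"
  unfolding common_feas_def sym_mat_def using Q_carrier Q_sym Q_psd Q_diag by auto

lemma blk_in: assumes i: "i < N" and a: "a < K i" shows "blk_off K i + a < L"
proof -
  have "blk_off K i + a < blk_off K (Suc i)" using a by (simp add: blk_off_Suc)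
  also have "\<dots> \<le> L" using i by (intro blk_off_mono, simp)
  finally show ?thesis .
qed

lemma Q_blk: assumes i: "i < N" shows "blk K QQ i i = 1\<^sub>m (K i)"
proof (rule eq_matI)
  fix a b assume "a < dim_row (1\<^sub>m (K i))" "b < dim_col (1\<^sub>m (K i))"
  then have a: "a < K i" and b: "b < K i" by auto
  have ra: "blk_off K i + a < L" and rb: "blk_off K i + b < L" using blk_in[OF i] a b by auto
  have "gam (blk_off K i + a) = gam (blk_off K i + b) \<longleftrightarrow> a = b"
    using same_blk[OF ra rb] blk_idx_eq[of a K i, OF a] blk_idx_eq[of b K i, OF b] by auto
  then show "blk K QQ i i $$ (a,b) = 1\<^sub>m (K i) $$ (a,b)"
    using a b ra rb by (simp add: blk_def Q_entry)
qed (auto simp: blk_def)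

lemma Q_strong: "QQ \<in> strong_feas N K"
  unfolding strong_feas_def using Q_common Q_blk unfolding common_feas_def by auto

lemma Q_weak: "QQ \<in> weak_feas N K"
proof -
  have "mtrace (blk K QQ i i * ((1 / real (K i)) \<cdot>\<^sub>m mat (K i) (K i) (\<lambda>_. 1))) = 1" if i: "i < N" for i
  proof -
    have "blk K QQ i i * ((1 / real (K i)) \<cdot>\<^sub>m mat (K i) (K i) (\<lambda>_. 1)) = (1 / real (K i)) \<cdot>\<^sub>m mat (K i) (K i) (\<lambda>_. 1)"
      using Q_blk[OF i] by simp
    moreover have "K i \<ge> 1" using Kpos i by auto
    ultimately show ?thesis by (simp add: mtrace_def)
  qed
  then show ?thesis unfolding weak_feas_def using Q_common unfolding common_feas_def by auto
qed

lemma Q_gw: "QQ \<in> gw_feas N K"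
  unfolding gw_feas_def using Q_common unfolding common_feas_def by auto

lemma feas_common:
  assumes "F \<in> {strong_feas N K, weak_feas N K, gw_feas N K}" and "Y \<in> F"
  shows "common_feas L Y"
proof -
  have "Y $$ (r,r) = 1" if Y: "Y \<in> strong_feas N K" and r: "r < L" for r
  proof -
    let ?i = "blk_idx K r"
    let ?a = "r - blk_off K ?i"
    have i: "?i < N" and a: "?a < K ?i" "blk_off K ?i \<le> r" using blk_idx_props[OF r] by auto
    have "blk K Y ?i ?i = 1\<^sub>m (K ?i)" using Y i unfolding strong_feas_def by auto
    then have "blk K Y ?i ?i $$ (?a, ?a) = 1" using a by simp
    then show ?thesis using a by (simp add: blk_def)
  qed
  note sdiag = this
  from assms(1) consider "F = strong_feas N K" | "F = weak_feas N K" | "F = gw_feas N K" by blast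
  then show ?thesis
  proof cases
    case 1
    then show ?thesis using assms(2) sdiag unfolding common_feas_def by (simp add: strong_feas_def)
  next
    case 2
    then show ?thesis using assms(2) unfolding common_feas_def by (simp add: weak_feas_def)
  next
    case 3
    then show ?thesis using assms(2) unfolding common_feas_def by (simp add: gw_feas_def)
  qed
qed

lemma Q_in: "F \<in> {strong_feas N K, weak_feas N K, gw_feas N K} \<Longrightarrow> QQ \<in> F"
  using Q_strong Q_weak Q_gw by auto

lemma trace_QY: assumes Y: "Y \<in> carrier_mat L L"
  shows "mtrace (QQ * Y) = (\<Sum>r<L. \<Sum>s<L. QQ $$ (r,s) * Y $$ (s,r))"
  unfolding mtrace_def using Q_carrier Y by (auto intro!: sum.cong simp: mult_entry[OF Q_carrier Y])

lemma trace_bound: assumes Y: "common_feas L Y"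
  shows "mtrace (QQ * Y) \<le> mtrace (QQ * QQ)"
proof -
  have Yc: "Y \<in> carrier_mat L L" using Y unfolding common_feas_def sym_mat_def by auto
  have "mtrace (QQ * Y) = (\<Sum>r<L. \<Sum>s<L. QQ $$ (r,s) * Y $$ (s,r))" by (rule trace_QY[OF Yc])
  also have "\<dots> \<le> (\<Sum>r<L. \<Sum>s<L. QQ $$ (r,s) * QQ $$ (s,r))"
    by (intro sum_mono, auto simp: Q_entry common_le1[OF Y])
  also have "\<dots> = mtrace (QQ * QQ)" by (rule trace_QY[OF Q_carrier, symmetric])
  finally show ?thesis .
qed

lemma Q_opt: assumes F: "F \<in> {strong_feas N K, weak_feas N K, gw_feas N K}" shows "is_opt F QQ QQ"
  unfolding is_opt_def
proof (intro conjI ballI)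
  show "QQ \<in> F" by (rule Q_in[OF F])
  fix Y assume "Y \<in> F"
  then show "mtrace (QQ * Y) \<le> mtrace (QQ * QQ)" by (intro trace_bound feas_common[OF F])
qed

lemma opt_ones:
  assumes F: "F \<in> {strong_feas N K, weak_feas N K, gw_feas N K}" and X: "is_opt F QQ X"
    and r: "r < L" and s: "s < L" and g: "gam r = gam s"
  shows "X $$ (r,s) = 1"
proof -
  have XF: "X \<in> F" and le: "mtrace (QQ * QQ) \<le> mtrace (QQ * X)"
    using X Q_in[OF F] unfolding is_opt_def by auto
  have Xc: "common_feas L X" by (rule feas_common[OF F XF])
  have Xcar: "X \<in> carrier_mat L L" using Xc unfolding common_feas_def sym_mat_def by auto
  have eq: "(\<Sum>r<L. \<Sum>s<L. QQ $$ (r,s) * QQ $$ (s,r)) = (\<Sum>r<L. \<Sum>s<L. QQ $$ (r,s) * X $$ (s,r))"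
    using le trace_bound[OF Xc] trace_QY[OF Xcar] trace_QY[OF Q_carrier] by simp
  define h where "h = (\<lambda>r s. QQ $$ (r,s) * QQ $$ (s,r) - QQ $$ (r,s) * X $$ (s,r))"
  have tot: "(\<Sum>r<L. \<Sum>s<L. h r s) = 0"
    using eq by (simp add: sum_subtractf h_def)
  have nn: "\<And>r s. r < L \<Longrightarrow> s < L \<Longrightarrow> h r s \<ge> 0"
    by (auto simp: h_def Q_entry common_le1[OF Xc])
  have inner: "\<And>r. r < L \<Longrightarrow> (\<Sum>s<L. h r s) \<ge> 0" using nn by (auto intro!: sum_nonneg)
  have "\<forall>r\<in>{..<L}. (\<Sum>s<L. h r s) = 0"
    using sum_nonneg_eq_0_iff[of "{..<L}" "\<lambda>r. \<Sum>s<L. h r s"] tot inner by auto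
  then have "(\<Sum>t<L. h s t) = 0" using s by auto
  then have "\<forall>t\<in>{..<L}. h s t = 0"
    using sum_nonneg_eq_0_iff[of "{..<L}" "\<lambda>t. h s t"] nn s by auto
  then have "h s r = 0" using r by auto
  then show ?thesis using r s g by (simp add: h_def Q_entry)
qed

end

context pp_setup begin

definition mm :: "nat \<Rightarrow> real" where "mm c = (\<Sum>t<L. if gam t = c then 1 else 0)"
definition SS :: "real vec \<Rightarrow> nat \<Rightarrow> real" where "SS w c = (\<Sum>t<L. if gam t = c then w $ t else 0)"
definition GG :: "real mat" where
  "GG = mat L L (\<lambda>(r,s). if gam r = gam s then (real (gam r) + 1) / mm (gam r) else 0)"

lemma GG_carrier: "GG \<in> carrier_mat L L" by (simp add: GG_def)

lemma GG_sym: "transpose_mat GG = GG"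
  by (rule eq_matI, auto simp: GG_def)

lemma sum_cluster: "(\<Sum>s<L. (if gam r = gam s then k else 0) * w $ s) = k * SS w (gam r)"
  unfolding SS_def sum_distrib_left by (rule sum.cong, auto)

lemma Qw: assumes w: "w \<in> carrier_vec L" and r: "r < L" shows "(QQ *\<^sub>v w) $ r = SS w (gam r)"
proof -
  have "(QQ *\<^sub>v w) $ r = (\<Sum>s<L. QQ $$ (r,s) * w $ s)" by (rule mv_entry[OF Q_carrier w r])
  also have "\<dots> = (\<Sum>s<L. (if gam r = gam s then 1 else 0) * w $ s)"
    using r by (intro sum.cong, auto simp: Q_entry)
  finally show ?thesis using sum_cluster[of r 1 w] by simp
qed

lemma Gw: assumes w: "w \<in> carrier_vec L" and r: "r < L"
  shows "(GG *\<^sub>v w) $ r = (real (gam r) + 1) / mm (gam r) * SS w (gam r)"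
proof -
  have "(GG *\<^sub>v w) $ r = (\<Sum>s<L. GG $$ (r,s) * w $ s)" by (rule mv_entry[OF GG_carrier w r])
  also have "\<dots> = (\<Sum>s<L. (if gam r = gam s then (real (gam r) + 1) / mm (gam r) else 0) * w $ s)"
    using r by (intro sum.cong, auto simp: GG_def)
  finally show ?thesis using sum_cluster by simp
qed

lemma mm_zero: assumes "mm c = 0" shows "SS w c = 0"
proof -
  have "\<forall>t\<in>{..<L}. (if gam t = c then 1 else 0::real) = 0"
    using sum_nonneg_eq_0_iff[of "{..<L}" "\<lambda>t. if gam t = c then 1 else 0::real"] assms
    unfolding mm_def by auto
  then show ?thesis unfolding SS_def by (intro sum.neutral, auto split: if_splits)
qed

lemma mm_sum: "(\<Sum>r<L. if gam r = c then k else 0) = k * mm c"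
  unfolding mm_def sum_distrib_left by (rule sum.cong, auto)

lemma regroup: "(\<Sum>t<L. f (gam t) * w $ t) = (\<Sum>c<M. f c * SS w c)"
proof -
  have "(\<Sum>c<M. f c * SS w c) = (\<Sum>c<M. \<Sum>t<L. if c = gam t then f (gam t) * w $ t else 0)"
    unfolding SS_def sum_distrib_left by (intro sum.cong, auto)
  also have "\<dots> = (\<Sum>t<L. \<Sum>c<M. if c = gam t then f (gam t) * w $ t else 0)" by (rule sum.swap)
  also have "\<dots> = (\<Sum>t<L. f (gam t) * w $ t)"
    by (rule sum.cong, simp, subst sum.delta, auto simp: gam)
  finally show ?thesis by simp
qed

lemma eig_analysis:
  assumes w: "w \<in> carrier_vec L" and ev: "\<And>r. r < L \<Longrightarrow> (GG *\<^sub>v w) $ r = lam * w $ r"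
    and X: "common_feas L X" and Xones: "\<And>r s. r < L \<Longrightarrow> s < L \<Longrightarrow> gam r = gam s \<Longrightarrow> X $$ (r,s) = 1"
  shows "(\<exists>mu. QQ *\<^sub>v w = mu \<cdot>\<^sub>v w) \<and> w \<bullet> (X *\<^sub>v w) = w \<bullet> (QQ *\<^sub>v w)"
proof -
  have Xc: "X \<in> carrier_mat L L" using X unfolding common_feas_def sym_mat_def by auto
  have key: "(real c + 1) * SS w c = lam * SS w c" for c
  proof (cases "mm c = 0")
    case True then show ?thesis using mm_zero by simp
  next
    case False
    have "lam * SS w c = (\<Sum>r<L. if gam r = c then lam * w $ r else 0)"
      unfolding SS_def sum_distrib_left by (intro sum.cong, auto)
    also have "\<dots> = (\<Sum>r<L. if gam r = c then (real c + 1) / mm c * SS w c else 0)"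
      by (intro sum.cong, auto simp: ev[symmetric] Gw[OF w])
    also have "\<dots> = (real c + 1) / mm c * SS w c * mm c" by (rule mm_sum)
    also have "\<dots> = (real c + 1) * SS w c" using False by simp
    finally show ?thesis by (rule sym)
  qed
  have pointwise: "\<forall>r<L. w $ r * (X *\<^sub>v w) $ r = w $ r * (QQ *\<^sub>v w) $ r"
    and muex: "\<exists>mu. QQ *\<^sub>v w = mu \<cdot>\<^sub>v w"
  proof -
    show "\<forall>r<L. w $ r * (X *\<^sub>v w) $ r = w $ r * (QQ *\<^sub>v w) $ r" "\<exists>mu. QQ *\<^sub>v w = mu \<cdot>\<^sub>v w"
    proof (atomize(full), cases "\<forall>c. SS w c = 0")
      case True
      define rep where "rep = (\<lambda>c. SOME t. t < L \<and> gam t = c)"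
      have rep: "rep (gam t) < L \<and> gam (rep (gam t)) = gam t" if t: "t < L" for t
        unfolding rep_def by (rule someI[of _ t], insert t, auto)
      have Xw: "(X *\<^sub>v w) $ r = 0" if r: "r < L" for r
      proof -
        have "(X *\<^sub>v w) $ r = (\<Sum>t<L. X $$ (r,t) * w $ t)" by (rule mv_entry[OF Xc w r])
        also have "\<dots> = (\<Sum>t<L. X $$ (r, rep (gam t)) * w $ t)"
        proof (intro sum.cong, simp)
          fix t assume "t \<in> {..<L}"
          then have t: "t < L" by simp
          have "X $$ (t, rep (gam t)) = 1" using Xones[OF t] rep[OF t] by simp
          then have "X $$ (r,t) = X $$ (r, rep (gam t))"
            using common_const[OF X r t] rep[OF t] by simp
          then show "X $$ (r,t) * w $ t = X $$ (r, rep (gam t)) * w $ t" by simp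
        qed
        also have "\<dots> = (\<Sum>c<M. X $$ (r, rep c) * SS w c)" by (rule regroup)
        also have "\<dots> = 0" using True by simp
        finally show ?thesis .
      qed
      have "QQ *\<^sub>v w = 0 \<cdot>\<^sub>v w"
        by (rule eq_vecI, insert w True Q_carrier, auto simp: Qw)
      then show "(\<forall>r<L. w $ r * (X *\<^sub>v w) $ r = w $ r * (QQ *\<^sub>v w) $ r) \<and> (\<exists>mu. QQ *\<^sub>v w = mu \<cdot>\<^sub>v w)"
        using Xw True w by (auto simp: Qw[OF w])
    next
      case False
      then obtain c0 where c0: "SS w c0 \<noteq> 0" by auto
      have lam: "lam = real c0 + 1" using key[of c0] c0 by simp
      have oth: "SS w c = 0" if "c \<noteq> c0" for c using key[of c] lam that by simp
      have mm0: "mm c0 \<noteq> 0" using mm_zero c0 by auto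
      define al where "al = SS w c0 / mm c0"
      have wr: "w $ r = (if gam r = c0 then al else 0)" if r: "r < L" for r
      proof -
        have e: "(real c0 + 1) * w $ r = (real (gam r) + 1) / mm (gam r) * SS w (gam r)"
          using ev[OF r] Gw[OF w r] lam by simp
        have k0: "real c0 + 1 \<noteq> 0" by (simp add: add_nonneg_eq_0_iff)
        show ?thesis
        proof (cases "gam r = c0")
          case True
          then have "(real c0 + 1) * w $ r = (real c0 + 1) * al" using e by (simp add: al_def)
          then show ?thesis using k0 True by simp
        next
          case False
          then have "(real c0 + 1) * w $ r = 0" using e oth[of "gam r"] by simp
          then show ?thesis using k0 False by simp
        qed
      qed
      have Qr: "(QQ *\<^sub>v w) $ r = (if gam r = c0 then al * mm c0 else 0)" if r: "r < L" for r
        using Qw[OF w r] oth[of "gam r"] mm0 by (auto simp: al_def)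
      have "QQ *\<^sub>v w = mm c0 \<cdot>\<^sub>v w"
        by (rule eq_vecI, insert w Q_carrier, auto simp: Qr wr)
      moreover have "w $ r * (X *\<^sub>v w) $ r = w $ r * (QQ *\<^sub>v w) $ r" if r: "r < L" for r
      proof (cases "gam r = c0")
        case True
        have "(X *\<^sub>v w) $ r = (\<Sum>t<L. X $$ (r,t) * w $ t)" by (rule mv_entry[OF Xc w r])
        also have "\<dots> = (\<Sum>t<L. if gam t = c0 then al else 0)"
          using Xones[OF r] True by (intro sum.cong, auto simp: wr)
        also have "\<dots> = al * mm c0" by (rule mm_sum)
        finally show ?thesis using Qr[OF r] True by simp
      next
        case False
        then show ?thesis using wr[OF r] by simp
      qed
      ultimately show "(\<forall>r<L. w $ r * (X *\<^sub>v w) $ r = w $ r * (QQ *\<^sub>v w) $ r) \<and> (\<exists>mu. QQ *\<^sub>v w = mu \<cdot>\<^sub>v w)"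
        by blast
    qed
  qed
  have "w \<bullet> (X *\<^sub>v w) = (\<Sum>r<L. w $ r * (X *\<^sub>v w) $ r)"
    by (rule sprod_sum[OF w], insert Xc w, simp)
  also have "\<dots> = (\<Sum>r<L. w $ r * (QQ *\<^sub>v w) $ r)" using pointwise by (intro sum.cong, auto)
  also have "\<dots> = w \<bullet> (QQ *\<^sub>v w)"
    by (rule sprod_sum[OF w, symmetric], insert Q_carrier w, simp)
  finally show ?thesis using muex by simp
qed

end

context pp_setup begin

lemma entropy_le:
  assumes X: "common_feas L X" and Xones: "\<And>r s. r < L \<Longrightarrow> s < L \<Longrightarrow> gam r = gam s \<Longrightarrow> X $$ (r,s) = 1"
  shows "vn_entropy QQ \<le> vn_entropy X"
proof -
  have Xc: "X \<in> carrier_mat L L" and Xsym: "transpose_mat X = X" and Xpsd: "psd L X"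
    using X unfolding common_feas_def sym_mat_def by auto
  obtain W DG where W: "W \<in> carrier_mat L L" and DG: "DG \<in> carrier_mat L L" and DGd: "diagonal_mat DG"
    and WTW: "transpose_mat W * W = 1\<^sub>m L" and WWT: "W * transpose_mat W = 1\<^sub>m L"
    and Geq: "GG = W * DG * transpose_mat W"
    using spectral[OF GG_carrier GG_sym] by blast
  have GW: "GG * W = W * DG"
  proof -
    have "GG * W = W * DG * (transpose_mat W * W)"
      unfolding Geq using W DG by (simp add: assoc_mult_mat[of _ L L _ L _ L])
    then show ?thesis using WTW W DG by simp
  qed
  have ev: "(GG *\<^sub>v col W j) $ r = DG $$ (j,j) * col W j $ r" if j: "j < L" and r: "r < L" for j r
  proof -
    have "(GG *\<^sub>v col W j) $ r = (GG * W) $$ (r,j)"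
    proof -
      have "col (GG * W) j $ r = (GG * W) $$ (r,j)" using GG_carrier W j r by (intro index_col, auto)
      then show ?thesis using col_mult2[OF GG_carrier W j] by simp
    qed
    also have "\<dots> = (W * DG) $$ (r,j)" by (simp add: GW)
    also have "\<dots> = (\<Sum>k<L. W $$ (r,k) * DG $$ (k,j))" by (rule mult_entry[OF W DG r j])
    also have "\<dots> = (\<Sum>k<L. if k = j then W $$ (r,k) * DG $$ (k,j) else 0)"
      by (rule sum.cong, insert DGd DG j, auto simp: diagonal_mat_def)
    also have "\<dots> = W $$ (r,j) * DG $$ (j,j)" using j by (subst sum.delta, auto)
    finally show ?thesis using W r j by simp
  qed
  have colc: "col W j \<in> carrier_vec L" for j by (rule carrier_vecI, insert W, simp)
  have ana: "(\<exists>mu. QQ *\<^sub>v col W j = mu \<cdot>\<^sub>v col W j) \<and>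
      col W j \<bullet> (X *\<^sub>v col W j) = col W j \<bullet> (QQ *\<^sub>v col W j)" if j: "j < L" for j
    by (rule eig_analysis[OF colc ev[OF j] X Xones])
  have "\<forall>j\<in>{..<L}. \<exists>mu. QQ *\<^sub>v col W j = mu \<cdot>\<^sub>v col W j" using ana by blast
  from bchoice[OF this] obtain mu where mu0: "\<forall>j\<in>{..<L}. QQ *\<^sub>v col W j = mu j \<cdot>\<^sub>v col W j"
    by blast
  have mu: "\<And>j. j < L \<Longrightarrow> QQ *\<^sub>v col W j = mu j \<cdot>\<^sub>v col W j" using mu0 by blast
  define D' where "D' = transpose_mat W * QQ * W"
  have D': "D' \<in> carrier_mat L L" using W Q_carrier by (simp add: D'_def)
  have colcol: "col W i \<bullet> col W j = (if i = j then 1 else 0)" if "i < L" "j < L" for i j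
  proof -
    have "(transpose_mat W * W) $$ (i,j) = col W i \<bullet> col W j" using W that by simp
    then show ?thesis using WTW that by simp
  qed
  have D'e: "D' $$ (i,j) = (if i = j then mu j else 0)" if i: "i < L" and j: "j < L" for i j
  proof -
    have "D' $$ (i,j) = col W i \<bullet> (QQ *\<^sub>v col W j)" unfolding D'_def by (rule quad_entry[OF Q_carrier W i j])
    also have "\<dots> = mu j * (col W i \<bullet> col W j)" using mu[OF j] W by simp
    finally show ?thesis using colcol[OF i j] by simp
  qed
  have D'd: "diagonal_mat D'" using D' D'e unfolding diagonal_mat_def by auto
  have Qeq: "QQ = W * D' * transpose_mat W"
  proof -
    have "W * D' * transpose_mat W = (W * transpose_mat W) * QQ * (W * transpose_mat W)"
      unfolding D'_def using W Q_carrier by (simp add: assoc_mult_mat[of _ L L _ L _ L])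
    then show ?thesis using WWT by (simp only: left_mult_one_mat[OF Q_carrier] right_mult_one_mat[OF Q_carrier])
  qed
  have "vn_entropy QQ = (\<Sum>j<L. ent_fun (D' $$ (j,j)))"
    by (rule vn_entropy_conj[OF W D' D'd WTW WWT Qeq])
  also have "\<dots> = (\<Sum>j<L. ent_fun ((transpose_mat W * X * W) $$ (j,j)))"
  proof (rule sum.cong, simp)
    fix j assume "j \<in> {..<L}"
    then have j: "j < L" by simp
    have "D' $$ (j,j) = col W j \<bullet> (QQ *\<^sub>v col W j)" unfolding D'_def by (rule quad_entry[OF Q_carrier W j j])
    also have "\<dots> = col W j \<bullet> (X *\<^sub>v col W j)" using ana[OF j] by simp
    also have "\<dots> = (transpose_mat W * X * W) $$ (j,j)" by (rule quad_entry[OF Xc W j j, symmetric])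
    finally show "ent_fun (D' $$ (j,j)) = ent_fun ((transpose_mat W * X * W) $$ (j,j))" by simp
  qed
  also have "\<dots> \<le> vn_entropy X"
  proof -
    obtain U DX where U: "U \<in> carrier_mat L L" and DX: "DX \<in> carrier_mat L L" and DXd: "diagonal_mat DX"
      and UTU: "transpose_mat U * U = 1\<^sub>m L" and UUT: "U * transpose_mat U = 1\<^sub>m L"
      and Xeq: "X = U * DX * transpose_mat U"
      using spectral[OF Xc Xsym] by blast
    have pos: "\<And>k. k < L \<Longrightarrow> DX $$ (k,k) \<ge> 0" by (rule psd_diag_nonneg[OF Xpsd U DX UTU Xeq])
    have "(\<Sum>j<L. ent_fun ((transpose_mat W * X * W) $$ (j,j))) \<le> (\<Sum>k<L. ent_fun (DX $$ (k,k)))"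
      by (rule schur_jensen[OF U DX DXd UTU UUT Xeq pos W WTW])
    also have "\<dots> = vn_entropy X" by (rule vn_entropy_conj[OF U DX DXd UTU UUT Xeq, symmetric])
    finally show ?thesis .
  qed
  finally show ?thesis .
qed

lemma main:
  "\<forall>F \<in> {strong_feas N K, weak_feas N K, gw_feas N K}.
     is_opt F QQ QQ \<and> (\<forall>X. is_opt F QQ X \<longrightarrow> vn_entropy QQ \<le> vn_entropy X)"
proof (intro ballI conjI allI impI)
  fix F assume F: "F \<in> {strong_feas N K, weak_feas N K, gw_feas N K}"
  show "is_opt F QQ QQ" by (rule Q_opt[OF F])
  fix X assume X: "is_opt F QQ X"
  have Xc: "common_feas L X" using feas_common[OF F] X unfolding is_opt_def by auto
  show "vn_entropy QQ \<le> vn_entropy X"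
    by (rule entropy_le[OF Xc], rule opt_ones[OF F X], auto)
qed

end

theorem theorem1:
  fixes N M :: nat and K :: "nat \<Rightarrow> nat" and Ps :: "nat \<Rightarrow> real mat"
  assumes "N \<ge> 1" and "M \<ge> 1"
    and "\<forall>i<N. K i \<ge> 1"
    and "\<forall>i<N. row_partial_perm (K i) M (Ps i)"
  defines "P \<equiv> vstack N K M Ps"
  defines "Q \<equiv> P * transpose_mat P"
  shows "\<forall>F \<in> {strong_feas N K, weak_feas N K, gw_feas N K}.
           is_opt F Q Q \<and> (\<forall>X. is_opt F Q X \<longrightarrow> vn_entropy Q \<le> vn_entropy X)"
proof -
  interpret pp_setup N M K Ps by (unfold_locales, insert assms, auto)
  show ?thesis unfolding Q_def P_def by (rule main)
qed

end
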